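(* Let $W=I_2(m)$, $m\ge3$. Writing $X^{(m)}_{\alpha\ldots}=\sum_{w\in W}q_w\delta_w$ with $q_w\in\mathcal{Q}$, the coefficient $c^{(m-3)}_{\beta,\alpha}$ of $\delta^{(m-3)}_{\beta\ldots}$ equals $$c^{(m-3)}_{\beta,\alpha}=\begin{cases}-\,y_\alpha\,\upsilon^{(3)}_\beta\big\{S^{(0,m-3)}_\beta(y_\alpha y_\beta)+s_\alpha(y_\alpha y_\beta)\big\},& m\text{ even},\\ \ \ \,y_\alpha\,\upsilon^{(3)}_\beta\big\{S^{(0,m-3)}_\beta(y_\alpha y_\beta)+s_\alpha(y_\alpha y_\beta)\big\},& m\text{ odd}.\end{cases}$$ Symmetrically, the coefficient $c^{(m-3)}_{\alpha,\beta}$ of $\delta^{(m-3)}_{\alpha\ldots}$ in $X^{(m)}_{\beta\ldots}$ is given by the same formula with $\alpha$ and $\beta$ interchanged.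
   Context: General setup: $W$ a finite real reflection group with root system $\Sigma$; $R$ an integral domain containing the ring $\mathcal{R}\subset\mathbb{R}$ generated by the coefficients of roots in the basis of simple roots; $F$ a one-dimensional commutative formal group law over $R$; $\mathcal{S}$ the formal root algebra (the quotient of the completed polynomial ring $R[[x_\lambda:\lambda\in\Lambda]]$, $\Lambda$ the lattice spanned by $\mathcal{R}$-multiples of roots, by the closed ideal generated by $x_0$ and the relations $x_{e_i\gamma+e_j\gamma'}=(e_ix_\gamma)+_F(e_jx_{\gamma'})$ for roots $\gamma,\gamma'$ and a fixed $\mathbb{Z}$-basis $(e_1=1,\dots,e_l)$ of $\mathcal{R}$), with $W$ acting by $w(x_\lambda)=x_{w(\lambda)}$; $\mathcal{Q}$ its localization at all $x_\gamma$; $\mathcal{Q}_W=\mathcal{Q}\otimes_RR[W]$ with left $\mathcal{Q}$-basis $\{\delta_w\}$ and product $(q\delta_w)(q'\delta_{w'})=q\,w(q')\delta_{ww'}$, $\mathbf 1=\delta_1$; $\delta_\gamma=\delta_{s_\gamma}$, $X_\gamma=\frac1{x_\gamma}(\mathbf 1-\delta_\gamma)$. Dihedral notation: $W=I_2(m)$, simple roots $\alpha,\beta$; $y_\gamma=1/x_\gamma\in\mathcal{Q}$; $W$ acts on products multiplicatively, $s(y_\gamma)=y_{s(\gamma)}$. $X^{(i)}_{\alpha\ldots}=X_\alpha X_\beta X_\alpha\cdots$ ($i$ alternating factors), $X^{(i)}_{\beta\ldots}$, $\delta^{(i)}_{\alpha\ldots}=\delta_\alpha\delta_\beta\cdots$,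 $\delta^{(i)}_{\beta\ldots}$, $s^{(i)}_{\alpha\ldots}=s_\alpha s_\beta\cdots$, $s^{(i)}_{\beta\ldots}$ ($i$ factors; $i=0$ gives $\mathbf 1$ / identity). $\omega_j=\alpha$ for $j$ even, $\omega_j=\beta$ for $j$ odd. For $0\le i\le m-1$: $\upsilon^{(i)}_\alpha=\prod_{j=0}^{m-i-1}s^{(j)}_{\alpha\ldots}(y_{\omega_j})$ and $\upsilon^{(i)}_\beta=\prod_{j=0}^{m-i-1}s^{(j)}_{\beta\ldots}(y_{\omega_{j+1}})$ (empty product $=1$). For $i\le j$: $S^{(i,j)}_\alpha(u)=\sum_{k=i}^js^{(k)}_{\alpha\ldots}(u)$, $S^{(i,j)}_\beta(u)=\sum_{k=i}^js^{(k)}_{\beta\ldots}(u)$; an empty range gives $0$. *)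

theory Defs
  imports Complex_Main
begin

type_synonym vec = "real \<times> real"
type_synonym wel = "vec \<Rightarrow> vec"   (* elements of W, as linear maps of R^2 *)

definition ip :: "vec \<Rightarrow> vec \<Rightarrow> real" where
  "ip u v = fst u * fst v + snd u * snd v"

definition refl :: "vec \<Rightarrow> wel" where
  "refl v = (\<lambda>u. (fst u - 2 * ip u v / ip v v * fst v, snd u - 2 * ip u v / ip v v * snd v))"

text \<open>Simple roots of I_2(m): angle between them is pi - pi/m.\<close>
definition root_a :: "nat \<Rightarrow> vec" where "root_a m = (1, 0)"
definition root_b :: "nat \<Rightarrow> vec" where "root_b m = (- cos (pi / real m), sin (pi / real m))"

fun alt :: "('a \<Rightarrow> 'a) \<Rightarrow> ('a \<Rightarrow> 'a) \<Rightarrow> nat \<Rightarrow> 'a \<Rightarrow> 'a" where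
  "alt a b 0 = id"
| "alt a b (Suc i) = a \<circ> alt b a i"

definition sa :: "nat \<Rightarrow> wel" where "sa m = refl (root_a m)"
definition sb :: "nat \<Rightarrow> wel" where "sb m = refl (root_b m)"

definition Wgrp :: "nat \<Rightarrow> wel set" where
  "Wgrp m = range (alt (sa m) (sb m)) \<union> range (alt (sb m) (sa m))"

definition roots :: "nat \<Rightarrow> vec set" where
  "roots m = (\<lambda>w. w (root_a m)) ` Wgrp m \<union> (\<lambda>w. w (root_b m)) ` Wgrp m"

text \<open>An element sum_w q_w delta_w of Q_W is represented by its coefficient function w \<mapsto> q_w
  (only values on W matter). The product is (q delta_u)(q' delta_v) = q u(q') delta_{uv}.\<close>

definition tmul :: "nat \<Rightarrow> (wel \<Rightarrow> 'q \<Rightarrow> 'q::comm_ring_1) \<Rightarrow> (wel \<Rightarrow> 'q) \<Rightarrow> (wel \<Rightarrow> 'q) \<Rightarrow> (wel \<Rightarrow> 'q)" where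
  "tmul m act P P' = (\<lambda>w. \<Sum>(u, v) \<in> {(u, v). u \<in> Wgrp m \<and> v \<in> Wgrp m \<and> u \<circ> v = w}. P u * act u (P' v))"

definition delta :: "wel \<Rightarrow> (wel \<Rightarrow> 'q::comm_ring_1)" where
  "delta w = (\<lambda>u. if u = w then 1 else 0)"

text \<open>X_gamma = (1/x_gamma)(1 - delta_gamma), with y = 1/x.\<close>
definition Xop :: "(vec \<Rightarrow> 'q::comm_ring_1) \<Rightarrow> vec \<Rightarrow> (wel \<Rightarrow> 'q)" where
  "Xop y g = (\<lambda>u. y g * delta id u - y g * delta (refl g) u)"

fun Xalt :: "nat \<Rightarrow> (wel \<Rightarrow> 'q \<Rightarrow> 'q::comm_ring_1) \<Rightarrow> (vec \<Rightarrow> 'q) \<Rightarrow> vec \<Rightarrow> vec \<Rightarrow> nat \<Rightarrow> (wel \<Rightarrow> 'q)" where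
  "Xalt m act y a b 0 = delta id"
| "Xalt m act y a b (Suc i) = tmul m act (Xop y a) (Xalt m act y b a i)"

definition omega :: "nat \<Rightarrow> nat \<Rightarrow> vec" where
  "omega m j = (if even j then root_a m else root_b m)"

definition ups_a :: "nat \<Rightarrow> (wel \<Rightarrow> 'q \<Rightarrow> 'q::comm_ring_1) \<Rightarrow> (vec \<Rightarrow> 'q) \<Rightarrow> nat \<Rightarrow> 'q" where
  "ups_a m act y i = (\<Prod>j = 0..<m - i. act (alt (sa m) (sb m) j) (y (omega m j)))"

definition ups_b :: "nat \<Rightarrow> (wel \<Rightarrow> 'q \<Rightarrow> 'q::comm_ring_1) \<Rightarrow> (vec \<Rightarrow> 'q) \<Rightarrow> nat \<Rightarrow> 'q" where
  "ups_b m act y i = (\<Prod>j = 0..<m - i. act (alt (sb m) (sa m) j) (y (omega m (j + 1))))"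

definition S_a :: "nat \<Rightarrow> (wel \<Rightarrow> 'q \<Rightarrow> 'q::comm_ring_1) \<Rightarrow> nat \<Rightarrow> nat \<Rightarrow> 'q \<Rightarrow> 'q" where
  "S_a m act i j u = (\<Sum>k = i..j. act (alt (sa m) (sb m) k) u)"

definition S_b :: "nat \<Rightarrow> (wel \<Rightarrow> 'q \<Rightarrow> 'q::comm_ring_1) \<Rightarrow> nat \<Rightarrow> nat \<Rightarrow> 'q \<Rightarrow> 'q" where
  "S_b m act i j u = (\<Sum>k = i..j. act (alt (sb m) (sa m) k) u)"

end

theory Submission
  imports Defs
begin


definition rot :: "real \<Rightarrow> wel" where
  "rot th = (\<lambda>u. (cos th * fst u - sin th * snd u, sin th * fst u + cos th * snd u))"
definition rf :: "real \<Rightarrow> wel" where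
  "rf th = (\<lambda>u. (cos th * fst u + sin th * snd u, sin th * fst u - cos th * snd u))"

lemma rf_rf: "rf a \<circ> rf b = rot (a - b)"
  by (rule ext) (simp add: rf_def rot_def cos_diff sin_diff algebra_simps)
lemma rot_rf: "rot a \<circ> rf b = rf (a + b)"
  by (rule ext) (simp add: rf_def rot_def cos_add sin_add algebra_simps)
lemma rf_rot: "rf a \<circ> rot b = rf (a - b)"
  by (rule ext) (simp add: rf_def rot_def cos_diff sin_diff algebra_simps)
lemma rot0: "rot 0 = id"
  by (rule ext) (simp add: rot_def)

lemma rot_eq: "rot a = rot b \<Longrightarrow> \<exists>n::int. a = b + 2 * pi * n"
proof -
  assume h: "rot a = rot b"
  have "rot a (1,0) = rot b (1,0)" using h by simp
  then have "sin a = sin b \<and> cos a = cos b" by (simp add: rot_def)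
  then show ?thesis using sin_cos_eq_iff by blast
qed
lemma rf_eq: "rf a = rf b \<Longrightarrow> \<exists>n::int. a = b + 2 * pi * n"
proof -
  assume h: "rf a = rf b"
  have "rf a (1,0) = rf b (1,0)" using h by simp
  then have "sin a = sin b \<and> cos a = cos b" by (simp add: rf_def)
  then show ?thesis using sin_cos_eq_iff by blast
qed
lemma rot_rf_ne: "rot a \<noteq> rf b"
proof
  assume h: "rot a = rf b"
  have 1: "rot a (1,0) = rf b (1,0)" using h by simp
  have 2: "rot a (0,1) = rf b (0,1)" using h by simp
  from 1 2 have "cos a = cos b" "sin a = sin b" "- sin a = sin b" "cos a = - cos b"
    by (simp_all add: rot_def rf_def)
  then have "cos a = 0" "sin a = 0" by simp_all
  then show False using sin_cos_squared_add[of a] by simp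
qed

lemma refl_a: "refl (root_a m) = rf pi"
  by (rule ext) (simp add: refl_def rf_def root_a_def ip_def)

lemma refl_b: "refl (root_b m) = rf (pi - 2 * (pi / real m))"
proof (rule ext)
  fix u :: vec
  define t where "t = pi / real m"
  have n: "cos t * cos t + sin t * sin t = 1" using sin_cos_squared_add[of t]
    by (simp add: power2_eq_square algebra_simps)
  have c2: "cos (t*2) = 2 * cos t * cos t - 1" using cos_double_cos[of t] by (simp add: power2_eq_square mult.commute)
  have s2: "sin (t*2) = 2 * sin t * cos t" using sin_double[of t] by (simp add: mult.commute)
  have "refl (root_b m) u = rf (pi - 2 * t) u"
    apply (simp add: refl_def rf_def root_b_def ip_def t_def[symmetric] n cos_diff sin_diff
        prod_eq_iff algebra_simps)
    apply (simp only: c2 s2)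
    using n by algebra
  then show "refl (root_b m) u = rf (pi - 2 * (pi / real m)) u" by (simp add: t_def)
qed

lemma alt_formula:
  "alt (rf pi) (rf (pi - 2*t)) n = (if even n then rot (real n * t) else rf (pi + (real n - 1) * t))
   \<and> alt (rf (pi - 2*t)) (rf pi) n = (if even n then rot (- real n * t) else rf (pi - (real n + 1) * t))"
proof (induction n)
  case 0
  then show ?case by (simp add: rot0)
next
  case (Suc n)
  show ?case
  proof (cases "even n")
    case True
    with Suc have "alt (rf pi) (rf (pi - 2*t)) n = rot (real n * t)"
      "alt (rf (pi - 2*t)) (rf pi) n = rot (- real n * t)" by auto
    then show ?thesis using True
      by (simp add: rf_rot algebra_simps)
  next
    case False
    with Suc have "alt (rf pi) (rf (pi - 2*t)) n = rf (pi + (real n - 1) * t)"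
      "alt (rf (pi - 2*t)) (rf pi) n = rf (pi - (real n + 1) * t)" by auto
    then show ?thesis using False
      by (simp add: rf_rf algebra_simps)
  qed
qed

lemma rot_period: "rot (x + 2*pi*of_int q) = rot x"
  by (rule ext) (simp add: rot_def cos_add sin_add)
lemma rf_period: "rf (x + 2*pi*of_int q) = rf x"
  by (rule ext) (simp add: rf_def cos_add sin_add)

lemma no_mult:
  fixes D n :: int and m :: nat
  assumes "0 < \<bar>D\<bar>" "\<bar>D\<bar> < 2 * int m" "D = 2 * int m * n"
  shows False
proof (cases "n = 0")
  case True then show ?thesis using assms by simp
next
  case False
  then have "\<bar>n\<bar> \<ge> 1" by linarith
  then have "int m * 1 \<le> int m * \<bar>n\<bar>" by (intro mult_left_mono) auto
  moreover have "\<bar>D\<bar> = 2 * (int m * \<bar>n\<bar>)" using assms(3) by (simp add: abs_mult)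
  ultimately show False using assms(2) by linarith
qed

lemma ang_int:
  fixes A B :: int and m :: nat
  assumes m: "m > 0" and e: "of_int A * (pi / real m) = of_int B * (pi / real m) + 2 * pi * of_int n"
  shows "A - B = 2 * int m * n"
proof -
  have "of_int A * (pi / real m) = (of_int B + 2 * real m * of_int n) * (pi / real m)"
    using e m by (simp add: field_simps)
  moreover have "pi / real m \<noteq> 0" using m by simp
  ultimately have "real_of_int A = of_int B + 2 * real m * of_int n" by simp
  then have "real_of_int (A - B) = real_of_int (2 * int m * n)" by simp
  then show ?thesis by (simp only: of_int_eq_iff)
qed

lemma rr_ne:
  fixes A B :: int and m :: nat
  assumes m: "m > 0"
    and X: "X = (if P then rot (of_int A * (pi / real m)) else rf (of_int A * (pi / real m)))"
    and Y: "Y = (if Q then rot (of_int B * (pi / real m)) else rf (of_int B * (pi / real m)))"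
    and b: "P = Q \<Longrightarrow> 0 < \<bar>A - B\<bar> \<and> \<bar>A - B\<bar> < 2 * int m"
  shows "X \<noteq> Y"
proof
  assume XY: "X = Y"
  show False
  proof (cases "P = Q")
    case False
    then show ?thesis using XY X Y rot_rf_ne by (cases P) (auto simp: rot_rf_ne[symmetric])
  next
    case True
    have "\<exists>n::int. of_int A * (pi / real m) = of_int B * (pi / real m) + 2 * pi * of_int n"
      using XY X Y True rot_eq rf_eq by (cases P) auto
    then obtain n :: int where "of_int A * (pi / real m) = of_int B * (pi / real m) + 2 * pi * of_int n"
      by blast
    then have "A - B = 2 * int m * n" using ang_int m by blast
    then show False using b[OF True] no_mult by blast
  qed
qed

definition angab :: "nat \<Rightarrow> nat \<Rightarrow> int" where
  "angab m n = (if even n then int n else int m + int n - 1)"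
definition angba :: "nat \<Rightarrow> nat \<Rightarrow> int" where
  "angba m n = (if even n then - int n else int m - int n - 1)"

lemma alt_repr:
  assumes m: "m > 0"
  shows "alt (sa m) (sb m) n = (if even n then rot (of_int (angab m n) * (pi / real m)) else rf (of_int (angab m n) * (pi / real m)))"
    and "alt (sb m) (sa m) n = (if even n then rot (of_int (angba m n) * (pi / real m)) else rf (of_int (angba m n) * (pi / real m)))"
proof -
  have pm: "pi = real m * (pi / real m)" using m by simp
  have f: "sa m = rf pi" "sb m = rf (pi - 2 * (pi / real m))"
    by (simp_all add: sa_def sb_def refl_a refl_b)
  note af = alt_formula[of "pi / real m" n]
  show "alt (sa m) (sb m) n = (if even n then rot (of_int (angab m n) * (pi / real m)) else rf (of_int (angab m n) * (pi / real m)))"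
  proof (cases "even n")
    case True then show ?thesis using af by (simp add: f angab_def)
  next
    case False
    have "pi + (real n - 1) * (pi / real m) = of_int (angab m n) * (pi / real m)"
      using False m by (simp add: angab_def field_simps)
    then show ?thesis using af False by (simp add: f)
  qed
  show "alt (sb m) (sa m) n = (if even n then rot (of_int (angba m n) * (pi / real m)) else rf (of_int (angba m n) * (pi / real m)))"
  proof (cases "even n")
    case True then show ?thesis using af by (simp add: f angba_def)
  next
    case False
    have "pi - (real n + 1) * (pi / real m) = of_int (angba m n) * (pi / real m)"
      using False m by (simp add: angba_def field_simps)
    then show ?thesis using af False by (simp add: f)
  qed
qed

lemma alt_distinct:
  assumes m: "m > 0" and ji: "j < i" and im: "i \<le> m"
  shows "alt (sa m) (sb m) i \<noteq> alt (sa m) (sb m) j"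
    "alt (sa m) (sb m) i \<noteq> alt (sb m) (sa m) j"
    "alt (sb m) (sa m) i \<noteq> alt (sb m) (sa m) j"
    "alt (sb m) (sa m) i \<noteq> alt (sa m) (sb m) j"
proof -
  note r = alt_repr[OF m]
  show "alt (sa m) (sb m) i \<noteq> alt (sa m) (sb m) j"
    by (rule rr_ne[OF m r(1) r(1)]) (use ji im in \<open>auto simp: angab_def\<close>)
  show "alt (sa m) (sb m) i \<noteq> alt (sb m) (sa m) j"
    by (rule rr_ne[OF m r(1) r(2)]) (use ji im in \<open>auto simp: angab_def angba_def\<close>)
  show "alt (sb m) (sa m) i \<noteq> alt (sb m) (sa m) j"
    by (rule rr_ne[OF m r(2) r(2)]) (use ji im in \<open>auto simp: angba_def\<close>)
  show "alt (sb m) (sa m) i \<noteq> alt (sa m) (sb m) j"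
    by (rule rr_ne[OF m r(2) r(1)]) (use ji im in \<open>auto simp: angab_def angba_def\<close>)
qed

lemma rot_in_F:
  assumes m: "m > 0"
  shows "rot (of_int A * (pi / real m)) \<in> (\<lambda>k. rot (real k * (pi / real m))) ` {..<2*m}"
    and "rf (of_int A * (pi / real m)) \<in> (\<lambda>k. rf (real k * (pi / real m))) ` {..<2*m}"
proof -
  define r where "r = A mod (2 * int m)"
  define q where "q = A div (2 * int m)"
  have A: "A = r + 2 * int m * q" unfolding r_def q_def by simp
  have r0: "0 \<le> r" "r < 2 * int m" unfolding r_def using m by simp_all
  have e: "of_int A * (pi / real m) = real (nat r) * (pi / real m) + 2 * pi * of_int q"
    using m r0 by (simp add: A field_simps)
  have k: "nat r < 2 * m" using r0 by linarith
  show "rot (of_int A * (pi / real m)) \<in> (\<lambda>k. rot (real k * (pi / real m))) ` {..<2*m}"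
    unfolding e rot_period using k by (intro imageI) simp
  show "rf (of_int A * (pi / real m)) \<in> (\<lambda>k. rf (real k * (pi / real m))) ` {..<2*m}"
    unfolding e rf_period using k by (intro imageI) simp
qed

lemma finite_W:
  assumes m: "m > 0"
  shows "finite (Wgrp m)"
proof -
  let ?F = "(\<lambda>k. rot (real k * (pi / real m))) ` {..<2*m} \<union> (\<lambda>k. rf (real k * (pi / real m))) ` {..<2*m}"
  have "Wgrp m \<subseteq> ?F"
  proof
    fix w assume "w \<in> Wgrp m"
    then obtain n where "w = alt (sa m) (sb m) n \<or> w = alt (sb m) (sa m) n"
      unfolding Wgrp_def by auto
    then show "w \<in> ?F" using rot_in_F[OF m] alt_repr[OF m, of n] by (auto split: if_splits)
  qed
  then show ?thesis by (rule finite_subset) auto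
qed

lemma rf_ne_id: "rf th \<noteq> id"
proof
  assume h: "rf th = id"
  have "rf th (1,0) = (1,0)" "rf th (0,1) = (0,1)" using h by simp_all
  then show False by (simp add: rf_def)
qed

lemma sa_inv: "sa m \<circ> sa m = id"
  by (simp add: sa_def refl_a rf_rf rot0)
lemma sb_inv: "sb m \<circ> sb m = id"
  by (simp add: sb_def refl_b rf_rf rot0)
lemma sa_ne: "sa m \<noteq> id"
  by (simp add: sa_def refl_a rf_ne_id)
lemma sb_ne: "sb m \<noteq> id"
  by (simp add: sb_def refl_b rf_ne_id)



locale dih =
  fixes m :: nat and act :: "wel \<Rightarrow> 'q::comm_ring_1 \<Rightarrow> 'q" and y :: "vec \<Rightarrow> 'q" and a b :: vec
  assumes fin: "finite (Wgrp m)"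
    and Wab: "Wgrp m = range (alt (refl a) (refl b)) \<union> range (alt (refl b) (refl a))"
    and inva: "refl a \<circ> refl a = id" and invb: "refl b \<circ> refl b = id"
    and nea: "refl a \<noteq> id" and neb: "refl b \<noteq> id"
    and dist: "\<And>i j. j < i \<Longrightarrow> i \<le> m \<Longrightarrow>
      alt (refl a) (refl b) i \<noteq> alt (refl a) (refl b) j \<and> alt (refl a) (refl b) i \<noteq> alt (refl b) (refl a) j
      \<and> alt (refl b) (refl a) i \<noteq> alt (refl b) (refl a) j \<and> alt (refl b) (refl a) i \<noteq> alt (refl a) (refl b) j"
    and act_id: "act id = id"
    and act_comp: "\<And>u v. u \<in> Wgrp m \<Longrightarrow> v \<in> Wgrp m \<Longrightarrow> act (u \<circ> v) = act u \<circ> act v"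
    and act_add: "\<And>w p q. w \<in> Wgrp m \<Longrightarrow> act w (p + q) = act w p + act w q"
    and act_mult: "\<And>w p q. w \<in> Wgrp m \<Longrightarrow> act w (p * q) = act w p * act w q"
    and act_one: "\<And>w. w \<in> Wgrp m \<Longrightarrow> act w 1 = 1"
begin

definition pair :: "vec \<Rightarrow> vec \<Rightarrow> bool" where
  "pair c d \<longleftrightarrow> (c = a \<and> d = b) \<or> (c = b \<and> d = a)"

lemma pair_sym: "pair c d \<Longrightarrow> pair d c"
  unfolding pair_def by auto

lemma pair_W: "pair c d \<Longrightarrow> Wgrp m = range (alt (refl c) (refl d)) \<union> range (alt (refl d) (refl c))"
  unfolding pair_def using Wab by auto

lemma pair_inv: "pair c d \<Longrightarrow> refl c \<circ> refl c = id"
  unfolding pair_def using inva invb by auto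

lemma pair_ne: "pair c d \<Longrightarrow> refl c \<noteq> id"
  unfolding pair_def using nea neb by auto

lemma pair_dist: "pair c d \<Longrightarrow> j < i \<Longrightarrow> i \<le> m \<Longrightarrow>
      alt (refl c) (refl d) i \<noteq> alt (refl c) (refl d) j \<and> alt (refl c) (refl d) i \<noteq> alt (refl d) (refl c) j"
  unfolding pair_def using dist by blast

lemma alt_in: "pair c d \<Longrightarrow> alt (refl c) (refl d) n \<in> Wgrp m"
  using pair_W by auto

lemma id_in: "id \<in> Wgrp m"
  using alt_in[of a b 0] by (simp add: pair_def)

lemma refl_in: "pair c d \<Longrightarrow> refl c \<in> Wgrp m"
  using alt_in[of c d 1] by simp

lemma alt_Suc_inv: "pair c d \<Longrightarrow> refl c \<circ> alt (refl c) (refl d) (Suc n) = alt (refl d) (refl c) n"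
  using pair_inv[of c d] by (simp add: o_assoc)

lemma closed: "pair c d \<Longrightarrow> w \<in> Wgrp m \<Longrightarrow> refl c \<circ> w \<in> Wgrp m"
proof -
  assume p: "pair c d" and w: "w \<in> Wgrp m"
  then obtain n where "w = alt (refl c) (refl d) n \<or> w = alt (refl d) (refl c) n"
    using pair_W by auto
  then show ?thesis
  proof
    assume w: "w = alt (refl c) (refl d) n"
    show ?thesis
    proof (cases n)
      case 0 then show ?thesis using w refl_in[OF p] by simp
    next
      case (Suc k) then show ?thesis using w alt_Suc_inv[OF p] alt_in[OF pair_sym[OF p]] by simp
    qed
  next
    assume "w = alt (refl d) (refl c) n"
    then have "refl c \<circ> w = alt (refl c) (refl d) (Suc n)" by simp
    then show ?thesis using alt_in[OF p, of "Suc n"] by simp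
  qed
qed

lemma act_zero: "w \<in> Wgrp m \<Longrightarrow> act w 0 = 0"
  using act_add[of w 0 0] by simp

lemma act_neg: "w \<in> Wgrp m \<Longrightarrow> act w (- p) = - act w p"
proof -
  assume w: "w \<in> Wgrp m"
  have "act w p + act w (- p) = 0" using act_add[OF w, of p "- p"] act_zero[OF w] by simp
  then show ?thesis by (simp add: minus_unique[symmetric])
qed

lemma act_diff: "w \<in> Wgrp m \<Longrightarrow> act w (p - q) = act w p - act w q"
  using act_add[of w p "- q"] act_neg[of w q] by simp

lemma act_sgn: "w \<in> Wgrp m \<Longrightarrow> act w ((-1) ^ n) = (-1) ^ n"
  by (induction n) (simp_all add: act_one act_mult act_neg)

lemma act_prod: "w \<in> Wgrp m \<Longrightarrow> act w (\<Prod>j\<in>A. f j) = (\<Prod>j\<in>A. act w (f j))"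
  by (induction A rule: infinite_finite_induct) (simp_all add: act_one act_mult)

lemma act_sum: "w \<in> Wgrp m \<Longrightarrow> act w (\<Sum>j\<in>A. f j) = (\<Sum>j\<in>A. act w (f j))"
  by (induction A rule: infinite_finite_induct) (simp_all add: act_zero act_add)

lemma act_invol: "pair c d \<Longrightarrow> act (refl c) (act (refl c) p) = p"
  using act_comp[OF refl_in refl_in, of c d c d] pair_inv[of c d] act_id
  by (metis comp_apply id_apply)

lemma act_altS: assumes pr: "pair c d"
  shows "act (alt (refl c) (refl d) (Suc k)) p = act (refl c) (act (alt (refl d) (refl c) k) p)"
  using act_comp[OF refl_in[OF pr] alt_in[OF pair_sym[OF pr]], of k] by simp

lemma tmul_X:
  assumes p: "pair c d" and w: "w \<in> Wgrp m"
  shows "tmul m act (Xop y c) P w = y c * P w - y c * act (refl c) (P (refl c \<circ> w))"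
proof -
  let ?S = "{(u, v). u \<in> Wgrp m \<and> v \<in> Wgrp m \<and> u \<circ> v = w}"
  let ?f = "\<lambda>(u, v). Xop y c u * act u (P v)"
  let ?T = "{(id, w), (refl c, refl c \<circ> w)}"
  have finS: "finite ?S"
    by (rule finite_subset[of _ "Wgrp m \<times> Wgrp m"]) (auto simp: fin)
  have TS: "?T \<subseteq> ?S"
    using w id_in refl_in[OF p] closed[OF p w] pair_inv[OF p] by (auto simp: o_assoc)
  have z: "\<forall>x\<in>?S - ?T. ?f x = 0"
  proof
    fix x assume x: "x \<in> ?S - ?T"
    obtain u v where uv: "x = (u, v)" by fastforce
    have "u \<noteq> id \<and> u \<noteq> refl c"
    proof
      show "u \<noteq> id" using x uv by auto
      show "u \<noteq> refl c"
      proof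
        assume "u = refl c"
        then have "refl c \<circ> v = w" using x uv by auto
        then have "refl c \<circ> w = (refl c \<circ> refl c) \<circ> v" by (metis o_assoc)
        then have "v = refl c \<circ> w" using pair_inv[OF p] by simp
        then show False using x uv \<open>u = refl c\<close> by auto
      qed
    qed
    then show "?f x = 0" using uv by (simp add: Xop_def delta_def)
  qed
  have "tmul m act (Xop y c) P w = sum ?f ?S" by (simp add: tmul_def)
  also have "\<dots> = sum ?f ?T" using sum.mono_neutral_right[OF finS TS z] by simp
  also have "\<dots> = y c * P w - y c * act (refl c) (P (refl c \<circ> w))"
    using pair_ne[OF p] by (simp add: Xop_def delta_def act_id)
  finally show ?thesis .
qed

abbreviation C where "C i c d \<equiv> Xalt m act y c d i"

lemma step: "pair c d \<Longrightarrow> w \<in> Wgrp m \<Longrightarrow>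
  C (Suc i) c d w = y c * C i d c w - y c * act (refl c) (C i d c (refl c \<circ> w))"
  by (simp add: tmul_X)

lemma C0: "C 0 c d w = (if w = id then 1 else 0)"
  unfolding Xalt.simps delta_def by (simp add: eq_commute)

lemma supp:
  "pair c d \<Longrightarrow> w \<in> Wgrp m \<Longrightarrow> w \<notin> alt (refl c) (refl d) ` {..i} \<union> alt (refl d) (refl c) ` {..i}
   \<Longrightarrow> C i c d w = 0"
proof (induction i arbitrary: c d w)
  case 0
  then have "w \<noteq> id" by auto
  then show ?case by (metis C0)
next
  case (Suc i)
  note p = Suc.prems(1) and w = Suc.prems(2) and nw = Suc.prems(3)
  have p': "pair d c" using pair_sym[OF p] .
  have 1: "C i d c w = 0"
    by (rule Suc.IH[OF p' w]) (use nw in auto)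
  have 2: "C i d c (refl c \<circ> w) = 0"
  proof (rule Suc.IH[OF p' closed[OF p w]])
    show "refl c \<circ> w \<notin> alt (refl d) (refl c) ` {..i} \<union> alt (refl c) (refl d) ` {..i}"
    proof
      assume "refl c \<circ> w \<in> alt (refl d) (refl c) ` {..i} \<union> alt (refl c) (refl d) ` {..i}"
      then obtain j where j: "j \<le> i" and
        "refl c \<circ> w = alt (refl d) (refl c) j \<or> refl c \<circ> w = alt (refl c) (refl d) j" by auto
      moreover have ww: "w = refl c \<circ> (refl c \<circ> w)" using pair_inv[OF p] by (metis o_assoc id_comp)
      ultimately have "w = alt (refl c) (refl d) (Suc j) \<or> w = refl c \<circ> alt (refl c) (refl d) j"
        by auto
      then show False
      proof
        assume h: "w = alt (refl c) (refl d) (Suc j)"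
        have "w \<in> alt (refl c) (refl d) ` {..Suc i}" by (rule image_eqI[where f="alt (refl c) (refl d)" and x="Suc j", OF h]) (use j in simp)
        then show False using nw by blast
      next
        assume h: "w = refl c \<circ> alt (refl c) (refl d) j"
        show False
        proof (cases j)
          case 0 then have e: "w = alt (refl c) (refl d) 1" using h by simp
          have "w \<in> alt (refl c) (refl d) ` {..Suc i}" by (rule image_eqI[where f="alt (refl c) (refl d)" and x=1, OF e]) simp
          then show False using nw by blast
        next
          case (Suc k)
          then have e: "w = alt (refl d) (refl c) k" using h alt_Suc_inv[OF p] by simp
          have "w \<in> alt (refl d) (refl c) ` {..Suc i}" by (rule image_eqI[where f="alt (refl d) (refl c)" and x=k, OF e]) (use Suc j in simp)
          then show False using nw by blast
        qed
      qed
    qed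
  qed
  show ?case using step[OF p w] 1 2 act_zero[OF refl_in[OF p]] by simp
qed

lemma zero: "pair c d \<Longrightarrow> Suc i \<le> m \<Longrightarrow> C i d c (alt (refl c) (refl d) (Suc i)) = 0"
proof -
  assume p: "pair c d" and im: "Suc i \<le> m"
  show ?thesis
  proof (rule supp[OF pair_sym[OF p] alt_in[OF p]])
    show "alt (refl c) (refl d) (Suc i) \<notin> alt (refl d) (refl c) ` {..i} \<union> alt (refl c) (refl d) ` {..i}"
      using pair_dist[OF p _ im] by fastforce
  qed
qed

definition pii :: "vec \<Rightarrow> vec \<Rightarrow> nat \<Rightarrow> 'q" where
  "pii c d n = (\<Prod>j<n. act (alt (refl c) (refl d) j) (y (if even j then c else d)))"

lemma odd_if: "(if odd (j::nat) then (c::vec) else d) = (if even j then d else c)" by simp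

lemma pii_Suc: assumes p: "pair c d" shows "pii c d (Suc n) = y c * act (refl c) (pii d c n)"
proof -
  have "pii c d (Suc n) = act (alt (refl c) (refl d) 0) (y (if even (0::nat) then c else d)) *
     (\<Prod>j<n. act (alt (refl c) (refl d) (Suc j)) (y (if even (Suc j) then c else d)))"
    unfolding pii_def by (simp only: prod.lessThan_Suc_shift)
  also have "\<dots> = y c * act (refl c) (pii d c n)"
    unfolding pii_def act_prod[OF refl_in[OF p]] act_altS[OF p] by (simp add: act_id odd_if)
  finally show ?thesis .
qed

lemma pii_0: "pii c d 0 = 1" by (simp add: pii_def)

lemma Ptop: "pair c d \<Longrightarrow> i \<le> m \<Longrightarrow> C i c d (alt (refl c) (refl d) i) = (-1)^i * pii c d i"
proof (induction i arbitrary: c d)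
  case 0 then show ?case by (simp add: delta_def pii_0 id_def)
next
  case (Suc i)
  note p = Suc.prems(1)
  have p': "pair d c" using pair_sym[OF p] .
  have e: "refl c \<circ> alt (refl c) (refl d) (Suc i) = alt (refl d) (refl c) i" by (rule alt_Suc_inv[OF p])
  have "C (Suc i) c d (alt (refl c) (refl d) (Suc i))
      = y c * C i d c (alt (refl c) (refl d) (Suc i)) - y c * act (refl c) (C i d c (alt (refl d) (refl c) i))"
    using step[OF p alt_in[OF p, of "Suc i"], of i] unfolding e .
  also have "\<dots> = - y c * act (refl c) ((-1)^i * pii d c i)"
    using zero[OF p Suc.prems(2)] Suc.IH[OF p'] Suc.prems(2) by simp
  also have "\<dots> = (-1)^(Suc i) * pii c d (Suc i)"
    by (simp add: pii_Suc[OF p] act_mult[OF refl_in[OF p]] act_sgn[OF refl_in[OF p]])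
  finally show ?case .
qed

lemma Acoef: assumes p: "pair c d" and im: "Suc i \<le> m"
  shows "C (Suc i) c d (alt (refl d) (refl c) i) = y c * ((-1)^i * pii d c i)"
proof -
  have p': "pair d c" using pair_sym[OF p] .
  have e: "refl c \<circ> alt (refl d) (refl c) i = alt (refl c) (refl d) (Suc i)" by simp
  have "C (Suc i) c d (alt (refl d) (refl c) i)
     = y c * C i d c (alt (refl d) (refl c) i) - y c * act (refl c) (C i d c (alt (refl c) (refl d) (Suc i)))"
    using step[OF p alt_in[OF p', of i], of i] unfolding e .
  also have "\<dots> = y c * ((-1)^i * pii d c i) - y c * act (refl c) 0"
    by (simp only: zero[OF p im] Ptop[OF p'] im Suc_leD)
  also have "\<dots> = y c * ((-1)^i * pii d c i)" by (simp add: act_zero[OF refl_in[OF p]])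
  finally show ?thesis .
qed

lemma act_sum_alt: assumes p: "pair c d"
  shows "act (refl c) (\<Sum>k\<le>i. act (alt (refl d) (refl c) k) u) = (\<Sum>k\<le>i. act (alt (refl c) (refl d) (Suc k)) u)"
  unfolding act_sum[OF refl_in[OF p]] act_altS[OF p] ..

lemma sum_comm: "(\<Sum>k\<le>i. act (w k) (y d * y c)) = (\<Sum>k\<le>i. act (w k) (y c * y d))"
  by (simp only: mult.commute[of "y d" "y c"])

lemma Bu: "pair c d \<Longrightarrow> Suc (Suc i) \<le> m \<Longrightarrow>
  C (Suc (Suc i)) c d (alt (refl c) (refl d) i) = (-1)^i * pii c d i * (\<Sum>k\<le>i. act (alt (refl c) (refl d) k) (y c * y d))"
proof (induction i arbitrary: c d)
  case 0
  note p = "0.prems"(1) and im = "0.prems"(2)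
  have p': "pair d c" using pair_sym[OF p] .
  have a1: "C 1 d c id = y d"
    using Acoef[OF p', of 0] im by (simp add: pii_0)
  have ne1: "refl c \<noteq> id" using pair_ne[OF p] .
  have ne2: "refl d \<circ> refl c \<noteq> id"
  proof -
    have "alt (refl d) (refl c) 2 \<noteq> alt (refl d) (refl c) 0" using pair_dist[OF p', of 0 2] im by simp
    then show ?thesis by (simp add: numeral_2_eq_2)
  qed
  have a2: "C 1 d c (refl c) = 0"
    using step[OF p' refl_in[OF p], of 0] ne1 ne2 act_zero[OF refl_in[OF p']]
    by (simp add: delta_def)
  have "C (Suc (Suc 0)) c d (alt (refl c) (refl d) 0) = y c * C 1 d c id - y c * act (refl c) (C 1 d c (refl c))"
    using step[OF p alt_in[OF p, of 0], of 1] by simp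
  also have "\<dots> = y c * y d" using a1 a2 act_zero[OF refl_in[OF p]] by simp
  finally have "C (Suc (Suc 0)) c d (alt (refl c) (refl d) 0) = y c * y d" .
  moreover have "(-1)^0 * pii c d 0 * (\<Sum>k\<le>0. act (alt (refl c) (refl d) k) (y c * y d)) = y c * y d"
    by (simp add: pii_0 act_id)
  ultimately show ?case by (rule trans[OF _ sym])
next
  case (Suc i)
  note p = Suc.prems(1) and im = Suc.prems(2)
  have p': "pair d c" using pair_sym[OF p] .
  have h1: "C (Suc (Suc (Suc i))) c d (alt (refl c) (refl d) (Suc i)) =
     y c * C (Suc (Suc i)) d c (alt (refl c) (refl d) (Suc i)) - y c * act (refl c) (C (Suc (Suc i)) d c (alt (refl d) (refl c) i))"
    using step[OF p alt_in[OF p, of "Suc i"], of "Suc (Suc i)"] unfolding alt_Suc_inv[OF p] .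
  have h2: "C (Suc (Suc i)) d c (alt (refl c) (refl d) (Suc i)) = y d * ((-1)^(Suc i) * pii c d (Suc i))"
    using Acoef[OF p', of "Suc i"] im by simp
  have h3: "C (Suc (Suc i)) d c (alt (refl d) (refl c) i) = (-1)^i * pii d c i * (\<Sum>k\<le>i. act (alt (refl d) (refl c) k) (y d * y c))"
    using Suc.IH[OF p'] im by simp
  have h4: "act (refl c) ((-1)^i * pii d c i * (\<Sum>k\<le>i. act (alt (refl d) (refl c) k) (y d * y c)))
     = (-1)^i * act (refl c) (pii d c i) * (\<Sum>k\<le>i. act (alt (refl c) (refl d) (Suc k)) (y c * y d))"
    by (simp only: act_mult[OF refl_in[OF p]] act_sgn[OF refl_in[OF p]] act_sum_alt[OF p] sum_comm)
  have h5: "(\<Sum>k\<le>Suc i. act (alt (refl c) (refl d) k) (y c * y d)) = y c * y d + (\<Sum>k\<le>i. act (alt (refl c) (refl d) (Suc k)) (y c * y d))"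
    by (simp only: sum.atMost_Suc_shift) (simp add: act_id)
  show ?case
    unfolding h1 h2 h3 h4 h5 pii_Suc[OF p] by (simp add: algebra_simps)
qed

lemma Dcoef: assumes p: "pair c d" and im: "Suc (Suc (Suc i)) \<le> m"
  shows "C (Suc (Suc (Suc i))) c d (alt (refl d) (refl c) i) = (-1)^i * y c * pii d c i *
     ((\<Sum>k\<le>i. act (alt (refl d) (refl c) k) (y c * y d)) + act (refl c) (y c * y d))"
proof -
  have p': "pair d c" using pair_sym[OF p] .
  have e: "refl c \<circ> alt (refl d) (refl c) i = alt (refl c) (refl d) (Suc i)" by simp
  have h1: "C (Suc (Suc (Suc i))) c d (alt (refl d) (refl c) i) =
     y c * C (Suc (Suc i)) d c (alt (refl d) (refl c) i) - y c * act (refl c) (C (Suc (Suc i)) d c (alt (refl c) (refl d) (Suc i)))"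
    using step[OF p alt_in[OF p', of i], of "Suc (Suc i)"] unfolding e .
  have h2: "C (Suc (Suc i)) d c (alt (refl d) (refl c) i) = (-1)^i * pii d c i * (\<Sum>k\<le>i. act (alt (refl d) (refl c) k) (y d * y c))"
    using Bu[OF p', of i] im by simp
  have h3: "C (Suc (Suc i)) d c (alt (refl c) (refl d) (Suc i)) = y d * ((-1)^(Suc i) * pii c d (Suc i))"
    using Acoef[OF p', of "Suc i"] im by simp
  have h4: "act (refl c) (y d * ((-1)^(Suc i) * pii c d (Suc i))) = act (refl c) (y d) * ((-1)^(Suc i) * (act (refl c) (y c) * pii d c i))"
    by (simp only: act_mult[OF refl_in[OF p]] act_sgn[OF refl_in[OF p]] pii_Suc[OF p] act_invol[OF p])
  show ?thesis
    unfolding h1 h2 h3 unfolding h4 unfolding sum_comm act_mult[OF refl_in[OF p]] by (simp add: algebra_simps)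
qed

end


theorem lemma6p4:
  fixes m :: nat
    and act :: "wel \<Rightarrow> 'q::comm_ring_1 \<Rightarrow> 'q"
    and x y :: "vec \<Rightarrow> 'q"
  assumes m3: "m \<ge> 3"
    and act_id: "act id = id"
    and act_comp: "\<And>u v. u \<in> Wgrp m \<Longrightarrow> v \<in> Wgrp m \<Longrightarrow> act (u \<circ> v) = act u \<circ> act v"
    and act_add: "\<And>w a b. w \<in> Wgrp m \<Longrightarrow> act w (a + b) = act w a + act w b"
    and act_mult: "\<And>w a b. w \<in> Wgrp m \<Longrightarrow> act w (a * b) = act w a * act w b"
    and act_one: "\<And>w. w \<in> Wgrp m \<Longrightarrow> act w 1 = 1"
    and act_x: "\<And>w g. w \<in> Wgrp m \<Longrightarrow> g \<in> roots m \<Longrightarrow> act w (x g) = x (w g)"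
    and xy: "\<And>g. g \<in> roots m \<Longrightarrow> x g * y g = 1"
  shows "Xalt m act y (root_a m) (root_b m) m (alt (sb m) (sa m) (m - 3))
           = (if even m then -1 else 1) * y (root_a m) * ups_b m act y 3
             * (S_b m act 0 (m - 3) (y (root_a m) * y (root_b m))
                + act (sa m) (y (root_a m) * y (root_b m)))
       \<and> Xalt m act y (root_b m) (root_a m) m (alt (sa m) (sb m) (m - 3))
           = (if even m then -1 else 1) * y (root_b m) * ups_a m act y 3
             * (S_a m act 0 (m - 3) (y (root_b m) * y (root_a m))
                + act (sb m) (y (root_b m) * y (root_a m)))"
proof -
  have m0: "m > 0" using m3 by simp
  interpret D: dih m act y "root_a m" "root_b m"
  proof
    show "finite (Wgrp m)" by (rule finite_W[OF m0])
    show "Wgrp m = range (alt (refl (root_a m)) (refl (root_b m))) \<union> range (alt (refl (root_b m)) (refl (root_a m)))"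
      by (simp add: Wgrp_def sa_def sb_def)
    show "refl (root_a m) \<circ> refl (root_a m) = id" using sa_inv[of m] by (simp add: sa_def)
    show "refl (root_b m) \<circ> refl (root_b m) = id" using sb_inv[of m] by (simp add: sb_def)
    show "refl (root_a m) \<noteq> id" using sa_ne[of m] by (simp add: sa_def)
    show "refl (root_b m) \<noteq> id" using sb_ne[of m] by (simp add: sb_def)
    fix i j :: nat
    assume "j < i" "i \<le> m"
    then show "alt (refl (root_a m)) (refl (root_b m)) i \<noteq> alt (refl (root_a m)) (refl (root_b m)) j \<and>
         alt (refl (root_a m)) (refl (root_b m)) i \<noteq> alt (refl (root_b m)) (refl (root_a m)) j \<and>
         alt (refl (root_b m)) (refl (root_a m)) i \<noteq> alt (refl (root_b m)) (refl (root_a m)) j \<and>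
         alt (refl (root_b m)) (refl (root_a m)) i \<noteq> alt (refl (root_a m)) (refl (root_b m)) j"
      using alt_distinct[OF m0] by (simp add: sa_def sb_def)
  qed (use act_id act_comp act_add act_mult act_one in auto)
  have pab: "D.pair (root_a m) (root_b m)" "D.pair (root_b m) (root_a m)"
    by (simp_all add: D.pair_def)
  have mm: "Suc (Suc (Suc (m - 3))) = m" using m3 by simp
  have sg: "(-1::'q)^(m-3) = (if even m then -1 else 1)"
  proof -
    have "m = (m - 3) + 3" using m3 by simp
    then have "(-1::'q)^m = (-1)^(m-3) * (-1)^3" by (metis power_add)
    then have "(-1::'q)^(m-3) = - ((-1)^m)" by (simp add: minus_equation_iff)
    then show ?thesis by simp
  qed
  have ub: "D.pii (root_b m) (root_a m) (m - 3) = ups_b m act y 3"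
    unfolding D.pii_def ups_b_def omega_def sa_def sb_def atLeast0LessThan by (simp add: D.odd_if)
  have ua: "D.pii (root_a m) (root_b m) (m - 3) = ups_a m act y 3"
    unfolding D.pii_def ups_a_def omega_def sa_def sb_def atLeast0LessThan by simp
  show ?thesis
    using D.Dcoef[OF pab(1), of "m - 3"] D.Dcoef[OF pab(2), of "m - 3"]
    unfolding mm sg ub ua S_a_def S_b_def atLeast0AtMost sa_def sb_def
    by simp
qed

end
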